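(* Let $\mathcal{G}=(I,E)$ be a finite, simple, undirected, connected graph, let $Q\in\mathbb{R}_+^{I\times I}$ with $Q_{ij}>0$ if $\{i,j\}\in E$ and $Q_{ij}=0$ otherwise, and let $\mathbf{q}\in\mathbb{R}_+^I$ be not identically zero. Let $\mathcal{M}_\mathcal{G}=(\vec E,\Phi)$ be the message digraph of $\mathcal{G}$ and define $\boldsymbol{\alpha}\in\mathbb{R}_+^{\vec E}$ by $\alpha_{hk}=q_k/Q_{kh}$ for every $hk\in\vec E$. Then, for every $ji\in\vec E$ belonging to a non-trivial strongly connected component of $\mathcal{M}_\mathcal{G}$, there exists $hk\in\vec E$ reachable from $ji$ in $\mathcal{M}_\mathcal{G}$ such that $\alpha_{hk}>0$.
   Context: The message digraph $\mathcal{M}_\mathcal{G}=(\vec E,\Phi)$ has node set $\vec E=\{ji:=(j,i):\{i,j\}\in E\}$ (ordered pairs of adjacent vertices) and arc set $\Phi=\{(ji,hk): \{i,j\},\{k,h\}\in E,\ i=h,\ j\neq k\}$, i.e. there is an arc from $ji$ to $ik$ whenever $\{i,j\},\{i,k\}\in E$ and $k\neq j$. In a digraph, $w$ is reachable from $v$ if there is a directed path (possibly of length $0$) from $v$ to $w$; a strongly connected component is a maximal induced subdigraph in which all nodes are mutually reachable, and it is non-trivial unless it consists of a single node without a self-loop. *)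

theory Defs
  imports Complex_Main
begin

definition simple_graph :: "'a set \<Rightarrow> 'a set set \<Rightarrow> bool" where
  "simple_graph I E \<longleftrightarrow> finite I \<and> (\<forall>e\<in>E. \<exists>i j. e = {i, j} \<and> i \<in> I \<and> j \<in> I \<and> i \<noteq> j)"

definition adj :: "'a set set \<Rightarrow> ('a \<times> 'a) set" where
  "adj E = {(i, j). {i, j} \<in> E}"

definition connected_graph :: "'a set \<Rightarrow> 'a set set \<Rightarrow> bool" where
  "connected_graph I E \<longleftrightarrow> I \<noteq> {} \<and> (\<forall>i\<in>I. \<forall>j\<in>I. (i, j) \<in> (adj E)\<^sup>*)"

definition msg_nodes :: "'a set set \<Rightarrow> ('a \<times> 'a) set" where
  "msg_nodes E = {(j, i). {i, j} \<in> E}"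

definition msg_arcs :: "'a set set \<Rightarrow> (('a \<times> 'a) \<times> ('a \<times> 'a)) set" where
  "msg_arcs E = {((j, i), (h, k)). {i, j} \<in> E \<and> {k, h} \<in> E \<and> i = h \<and> j \<noteq> k}"

definition reachable :: "('v \<times> 'v) set \<Rightarrow> 'v \<Rightarrow> 'v \<Rightarrow> bool" where
  "reachable R v w \<longleftrightarrow> (v, w) \<in> R\<^sup>*"

definition scc_of :: "('v \<times> 'v) set \<Rightarrow> 'v \<Rightarrow> 'v set" where
  "scc_of R v = {w. reachable R v w \<and> reachable R w v}"

definition in_nontrivial_scc :: "('v \<times> 'v) set \<Rightarrow> 'v \<Rightarrow> bool" where
  "in_nontrivial_scc R v \<longleftrightarrow> \<not> (scc_of R v = {v} \<and> (v, v) \<notin> R)"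


definition msg_alpha :: "('a \<Rightarrow> 'a \<Rightarrow> real) \<Rightarrow> ('a \<Rightarrow> real) \<Rightarrow> 'a \<times> 'a \<Rightarrow> real" where
  "msg_alpha Q q hk = (case hk of (h, k) \<Rightarrow> q k / Q k h)"

end

theory Submission
  imports Defs
begin

theorem lemma5:
  fixes I :: "'a set" and E :: "'a set set"
    and Q :: "'a \<Rightarrow> 'a \<Rightarrow> real" and q :: "'a \<Rightarrow> real"
  assumes graph: "simple_graph I E"
    and conn: "connected_graph I E"
    and Q_nonneg: "\<forall>i\<in>I. \<forall>j\<in>I. Q i j \<ge> 0"
    and Q_edge: "\<forall>i\<in>I. \<forall>j\<in>I. (({i, j} \<in> E \<longrightarrow> Q i j > 0) \<and> ({i, j} \<notin> E \<longrightarrow> Q i j = 0))"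
    and q_nonneg: "\<forall>i\<in>I. q i \<ge> 0"
    and q_nonzero: "\<exists>i\<in>I. q i \<noteq> 0"
    and ji: "(j, i) \<in> msg_nodes E"
    and nontriv: "in_nontrivial_scc (msg_arcs E) (j, i)"
  shows "\<exists>h k. (h, k) \<in> msg_nodes E \<and> reachable (msg_arcs E) (j, i) (h, k) \<and> msg_alpha Q q (h, k) > 0"
proof -
  let ?A = "msg_arcs E"
  define R where "R = {n. ((j,i), n) \<in> ?A\<^sup>*}"
  define T where "T = {k. \<exists>h. (h,k) \<in> R}"
  have arc: "((a,b),(c,d)) \<in> ?A \<longleftrightarrow> {b,a} \<in> E \<and> {d,c} \<in> E \<and> b = c \<and> a \<noteq> d" for a b c d
    by (auto simp: msg_arcs_def)
  have jiE: "{i,j} \<in> E" using ji by (auto simp: msg_nodes_def)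
  have jiR: "(j,i) \<in> R" by (simp add: R_def)
  have iT: "i \<in> T" using jiR T_def by blast
  have predT: "a \<in> T" if ab: "(a,b) \<in> R" "(a,b) \<noteq> (j,i)" for a b
  proof -
    from ab have "((j,i),(a,b)) \<in> ?A\<^sup>*" by (simp add: R_def)
    then obtain p where p: "((j,i),p) \<in> ?A\<^sup>*" "(p,(a,b)) \<in> ?A"
      using ab(2) by (metis rtranclE)
    obtain x y where "p = (x,y)" by (cases p)
    with p arc have "y = a" "(x,y) \<in> R" by (auto simp: R_def)
    thus ?thesis by (auto simp: T_def)
  qed
  have jT: "j \<in> T"
  proof (cases "((j,i),(j,i)) \<in> ?A")
    case True
    then have "i = j" using arc by blast
    then show ?thesis using iT by simp
  next
    case False
    with nontriv have "scc_of ?A (j,i) \<noteq> {(j,i)}" by (auto simp: in_nontrivial_scc_def)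
    moreover have "(j,i) \<in> scc_of ?A (j,i)" by (simp add: scc_of_def reachable_def)
    ultimately obtain w where w: "w \<noteq> (j,i)" "((j,i),w) \<in> ?A\<^sup>*" "(w,(j,i)) \<in> ?A\<^sup>*"
      by (auto simp: scc_of_def reachable_def)
    from w(3) w(1) obtain p where p: "(w,p) \<in> ?A\<^sup>*" "(p,(j,i)) \<in> ?A"
      by (metis rtranclE)
    obtain x y where xy: "p = (x,y)" by (cases p)
    have "((j,i),p) \<in> ?A\<^sup>*" using w(2) p(1) by simp
    with p xy arc have "y = j" "(x,y) \<in> R" by (auto simp: R_def)
    thus ?thesis by (auto simp: T_def)
  qed
  have predT': "a \<in> T" if "(a,b) \<in> R" for a b
    using predT[OF that] jT by (cases "(a,b) = (j,i)") auto
  have closed: "y \<in> T" if xy: "x \<in> T" "{x,y} \<in> E" for x y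
  proof -
    from xy obtain h where h: "(h,x) \<in> R" by (auto simp: T_def)
    show ?thesis
    proof (cases "y = h")
      case True then show ?thesis using predT'[OF h] by simp
    next
      case False
      have hE: "{x,h} \<in> E"
      proof (cases "(h,x) = (j,i)")
        case True then show ?thesis using jiE by auto
      next
        case False
        from h have "((j,i),(h,x)) \<in> ?A\<^sup>*" by (simp add: R_def)
        then obtain p where p: "(p,(h,x)) \<in> ?A" using False by (metis rtranclE)
        obtain c d where "p = (c,d)" by (cases p)
        with p arc show ?thesis by auto
      qed
      have "((h,x),(x,y)) \<in> ?A" using arc hE xy(2) False by (auto simp: insert_commute)
      then have "(x,y) \<in> R" using h by (auto simp: R_def)
      then show ?thesis by (auto simp: T_def)
    qed
  qed
  have iI: "i \<in> I" using graph jiE by (auto simp: simple_graph_def doubleton_eq_iff)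
  have allT: "v \<in> T" if "v \<in> I" for v
  proof -
    have "(i,v) \<in> (adj E)\<^sup>*" using conn iI that by (auto simp: connected_graph_def)
    then show ?thesis
    proof (induction rule: rtrancl_induct)
      case base then show ?case using iT .
    next
      case (step y z) then show ?case using closed by (auto simp: adj_def)
    qed
  qed
  obtain w where w: "w \<in> I" "q w \<noteq> 0" using q_nonzero by blast
  then have qw: "q w > 0" using q_nonneg by force
  from allT[OF w(1)] obtain h where h: "(h,w) \<in> R" by (auto simp: T_def)
  have hE: "{w,h} \<in> E"
  proof (cases "(h,w) = (j,i)")
    case True then show ?thesis using jiE by auto
  next
    case False
    from h have "((j,i),(h,w)) \<in> ?A\<^sup>*" by (simp add: R_def)
    then obtain p where p: "(p,(h,w)) \<in> ?A" using False by (metis rtranclE)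
    obtain c d where "p = (c,d)" by (cases p)
    with p arc show ?thesis by auto
  qed
  have hI: "h \<in> I" using graph hE by (auto simp: simple_graph_def doubleton_eq_iff)
  have "Q w h > 0" using Q_edge w(1) hI hE by blast
  then have "msg_alpha Q q (h,w) > 0" using qw by (simp add: msg_alpha_def)
  moreover have "(h,w) \<in> msg_nodes E" using hE by (simp add: msg_nodes_def)
  moreover have "reachable ?A (j,i) (h,w)" using h by (simp add: R_def reachable_def)
  ultimately show ?thesis by blast
qed

end
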